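(* Let $n\ge2$ and let $x_1,\dots,x_n,y_1,\dots,y_{n-1}$ be the distinct elements of $[2n-1]$. Let $u$ be the tableau of shape $2^{n-1}1$ with first column $x_1,\dots,x_n$ and second column $y_1,\dots,y_{n-1}$, and for $i\in[n]$ let $s_i$ be the tableau of shape $2^{n-1}1$ with first column $y_1,\dots,y_{n-1},x_i$ and second column $x_1,\dots,\widehat{x_i},\dots,x_n$ (top to bottom). Then in $S^{2^{n-1}1}$, \[\varepsilon_u=\sum_{i=1}^n(-1)^{n-i}\varepsilon_{s_i}.\] Consequently $\tilde\Psi\circ\varphi=0$ on $V_{n,3}$.
   Context: For a tableau $t$ (filling of a Young diagram using each element of $[N]$ once) with column stabilizer $C_t$, $\{t\}$ is its row tabloid and $\varepsilon_t=\sum_{\beta\in C_t}\operatorname{sgn}(\beta)\{\beta t\}$; $S^\lambda$ is the Specht module spanned by the $\varepsilon_t$. $V_{n,3}$ is the $\mathbb C$-span of left-comb brackets $[[x_1,\dots,x_n],y_1,\dots,y_{n-1}]$ with $\{x_i\}\cup\{y_j\}=[2n-1]$, modulo antisymmetry in the $x$'s and separately in the $y$'s. $\varphi:V_{n,3}\to V_{n,3}$ is $\varphi([[x_1,\dots,x_n],y_1,\dots,y_{n-1}])=[[x_1,\dots,x_n],y_1,\dots,y_{n-1}]-\sum_{i=1}^n(-1)^{n-i}[[y_1,\dots,y_{n-1},x_i],x_1,\dots,\widehat{x_i},\dots,x_n]$, and $\tilde\Psi:V_{n,3}\to S^{2^{n-1}1}$ sends $[[x_1,\dots,x_n],y_1,\dots,y_{n-1}]$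 to $\varepsilon_t$, $t$ the tableau with first column the $x$'s and second column the $y$'s. *)

theory Defs
  imports Complex_Main "HOL-Combinatorics.Combinatorics"
begin

text \<open>Young diagrams: a shape is a list of row lengths; cells are (row, column), 0-indexed.\<close>
definition cells :: "nat list \<Rightarrow> (nat \<times> nat) set" where
  "cells la = {(i, j). i < length la \<and> j < la ! i}"

definition is_tableau :: "nat list \<Rightarrow> nat \<Rightarrow> (nat \<times> nat \<Rightarrow> nat) \<Rightarrow> bool" where
  "is_tableau la N t \<longleftrightarrow> bij_betw t (cells la) {1..N}"

text \<open>Row tabloid {t}, represented canonically as the map sending each entry to (1 + its row index)
  (entries not occurring are sent to 0).  Two tableaux have the same tabloid iff they are
  row-equivalent.\<close>
definition tabloid :: "nat list \<Rightarrow> (nat \<times> nat \<Rightarrow> nat) \<Rightarrow> (nat \<Rightarrow> nat)" where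
  "tabloid la t = (\<lambda>k. if k \<in> t ` cells la then Suc (fst (inv_into (cells la) t k)) else 0)"

definition col_stab :: "nat list \<Rightarrow> nat \<Rightarrow> (nat \<times> nat \<Rightarrow> nat) \<Rightarrow> (nat \<Rightarrow> nat) set" where
  "col_stab la N t = {\<beta>. \<beta> permutes {1..N} \<and>
      (\<forall>c\<in>cells la. \<exists>c'\<in>cells la. snd c' = snd c \<and> \<beta> (t c) = t c')}"

text \<open>Elements of the permutation module M^la are complex-valued functions on tabloids;
  the polytabloid eps_t = sum over beta in C_t of sgn(beta) {beta t}.\<close>
definition polytabloid :: "nat list \<Rightarrow> nat \<Rightarrow> (nat \<times> nat \<Rightarrow> nat) \<Rightarrow> ((nat \<Rightarrow> nat) \<Rightarrow> complex)" where
  "polytabloid la N t = (\<lambda>T. \<Sum>\<beta>\<in>col_stab la N t.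
      of_int (sign \<beta>) * (if tabloid la (\<beta> \<circ> t) = T then 1 else 0))"

definition hook_shape :: "nat \<Rightarrow> nat list" where
  "hook_shape n = replicate (n - 1) 2 @ [1]"

definition tab_cols :: "nat list \<Rightarrow> nat list \<Rightarrow> (nat \<times> nat \<Rightarrow> nat)" where
  "tab_cols c1 c2 = (\<lambda>(r, c). if c = 0 then c1 ! r else c2 ! r)"

text \<open>Left-comb brackets [[x_1..x_n], y_1..y_(n-1)] are represented by the pair (xs, ys).\<close>
definition valid_bracket :: "nat \<Rightarrow> nat list \<times> nat list \<Rightarrow> bool" where
  "valid_bracket n b \<longleftrightarrow> length (fst b) = n \<and> length (snd b) = n - 1 \<and>
      distinct (fst b @ snd b) \<and> set (fst b @ snd b) = {1..2*n-1}"

text \<open>phi on a generating bracket, as a formal linear combination of brackets.\<close>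
definition phi_gen :: "nat \<Rightarrow> nat list \<times> nat list \<Rightarrow> (nat list \<times> nat list \<Rightarrow> complex)" where
  "phi_gen n b = (\<lambda>b'. (if b' = b then 1 else 0)
      - (\<Sum>i<n. (-1) ^ (n - 1 - i) *
          (if b' = (snd b @ [fst b ! i], take i (fst b) @ drop (Suc i) (fst b)) then 1 else 0)))"

text \<open>Linear extensions to formal linear combinations of valid brackets (the free vector space
  covering V_{n,3}).\<close>
definition phi_lin :: "nat \<Rightarrow> (nat list \<times> nat list \<Rightarrow> complex) \<Rightarrow> (nat list \<times> nat list \<Rightarrow> complex)" where
  "phi_lin n c = (\<lambda>b'. \<Sum>b\<in>{b. valid_bracket n b}. c b * phi_gen n b b')"

definition Psi_lin :: "nat \<Rightarrow> (nat list \<times> nat list \<Rightarrow> complex) \<Rightarrow> ((nat \<Rightarrow> nat) \<Rightarrow> complex)" where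
  "Psi_lin n c = (\<lambda>T. \<Sum>b\<in>{b. valid_bracket n b}.
      c b * polytabloid (hook_shape n) (2*n-1) (tab_cols (fst b) (snd b)) T)"

end

theory Submission
  imports Defs "Jordan_Normal_Form.Determinant"
begin


definition conjp :: "(nat \<Rightarrow> nat) \<Rightarrow> nat set \<Rightarrow> nat set \<Rightarrow> (nat \<Rightarrow> nat) \<Rightarrow> (nat \<Rightarrow> nat)" where
  "conjp g A B p = (\<lambda>v. if v \<in> B then g (p (inv_into A g v)) else v)"

lemma conjp_in: "bij_betw g A B \<Longrightarrow> a \<in> A \<Longrightarrow> conjp g A B p (g a) = g (p a)"
  unfolding conjp_def by (auto simp: bij_betw_def)

lemma conjp_out: "v \<notin> B \<Longrightarrow> conjp g A B p v = v"
  unfolding conjp_def by auto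

lemma conjp_perm:
  assumes g: "bij_betw g A B" and fin: "finite A" and p: "p permutes A"
  shows "conjp g A B p permutes B \<and> sign (conjp g A B p) = sign p"
  using p fin
proof (induction rule: permutes_induct)
  case id
  have "conjp g A B (\<lambda>a. a) = id"
  proof
    fix v show "conjp g A B (\<lambda>a. a) v = id v"
      using g unfolding conjp_def by (auto simp: bij_betw_def f_inv_into_f)
  qed
  then show ?case by (simp add: permutes_id[unfolded id_def] sign_id)
next
  case (swap a b p)
  have finB: "finite B" using g fin bij_betw_finite by blast
  have ga: "g a \<in> B" "g b \<in> B" using g swap(1,2) by (auto simp: bij_betw_def)
  have eq: "conjp g A B (Transposition.transpose a b \<circ> p) =
     Transposition.transpose (g a) (g b) \<circ> conjp g A B p"
  proof
    fix v
    show "conjp g A B (Transposition.transpose a b \<circ> p) v =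
     (Transposition.transpose (g a) (g b) \<circ> conjp g A B p) v"
    proof (cases "v \<in> B")
      case True
      define u where "u = inv_into A g v"
      have u: "u \<in> A" "g u = v" using True g unfolding u_def
        by (auto simp: bij_betw_def inv_into_into f_inv_into_f)
      have pu: "p u \<in> A" using \<open>p permutes A\<close> u(1) by (simp add: permutes_in_image)
      have inj: "inj_on g A" using g by (simp add: bij_betw_def)
      have "Transposition.transpose (g a) (g b) (g (p u)) = g (Transposition.transpose a b (p u))"
        using inj pu swap(1,2) unfolding Transposition.transpose_def
        by (auto dest: inj_onD)
      moreover have "conjp g A B p v = g (p u)" by (simp add: conjp_def True u_def)
      moreover have "conjp g A B (Transposition.transpose a b \<circ> p) v = g (Transposition.transpose a b (p u))"
        by (simp add: conjp_def True u_def)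
      ultimately show ?thesis by simp
    next
      case False
      then show ?thesis using ga unfolding conjp_def Transposition.transpose_def by auto
    qed
  qed
  have pB: "conjp g A B p permutes B" using swap by blast
  have "Transposition.transpose (g a) (g b) \<circ> conjp g A B p permutes B"
    by (intro permutes_compose pB permutes_swap_id ga)
  moreover have "sign (Transposition.transpose (g a) (g b) \<circ> conjp g A B p) =
      sign (Transposition.transpose a b \<circ> p)"
  proof -
    have gab: "g a \<noteq> g b" using g swap(1,2,3) by (auto simp: bij_betw_def dest: inj_onD)
    have "sign (Transposition.transpose (g a) (g b) \<circ> conjp g A B p) =
      sign (Transposition.transpose (g a) (g b)) * sign (conjp g A B p)"
      by (rule sign_compose) (auto intro: permutes_imp_permutation[OF finB pB] permutation_swap_id)
    also have "\<dots> = sign (Transposition.transpose a b) * sign p"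
      using swap gab by (simp add: sign_swap_id)
    also have "\<dots> = sign (Transposition.transpose a b \<circ> p)"
      by (rule sign_compose[symmetric]) (auto intro: permutes_imp_permutation[OF fin \<open>p permutes A\<close>] permutation_swap_id)
    finally show ?thesis .
  qed
  ultimately show ?case using eq by (simp only: eq)
qed

lemma conjp_conjp:
  assumes g: "bij_betw g A B" and p: "p permutes A"
  shows "conjp (inv_into A g) B A (conjp g A B p) = p"
proof
  fix v show "conjp (inv_into A g) B A (conjp g A B p) v = p v"
  proof (cases "v \<in> A")
    case True
    have gi: "bij_betw (inv_into A g) B A" using g by (rule bij_betw_inv_into)
    have gv: "g v \<in> B" using g True by (auto simp: bij_betw_def)
    have "inv_into B (inv_into A g) v = g v"
      using g True by (metis bij_betw_def bij_betw_inv_into_right gv inv_into_f_eq gi)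
    then have "conjp (inv_into A g) B A (conjp g A B p) v = inv_into A g (conjp g A B p (g v))"
      using True unfolding conjp_def[of "inv_into A g"] by simp
    also have "\<dots> = inv_into A g (g (p v))" using conjp_in[OF g True] by simp
    also have "\<dots> = p v" using g p True by (simp add: bij_betw_def permutes_in_image)
    finally show ?thesis .
  next
    case False
    then show ?thesis using p unfolding conjp_def by (simp add: permutes_not_in)
  qed
qed

lemma conjp_conjp2:
  assumes g: "bij_betw g A B" and p: "p permutes B"
  shows "conjp g A B (conjp (inv_into A g) B A p) = p"
proof
  fix v show "conjp g A B (conjp (inv_into A g) B A p) v = p v"
  proof (cases "v \<in> B")
    case True
    have gi: "bij_betw (inv_into A g) B A" using g by (rule bij_betw_inv_into)
    have u: "inv_into A g v \<in> A" "g (inv_into A g v) = v" using g True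
      by (auto simp: bij_betw_def inv_into_into f_inv_into_f)
    have pv: "p v \<in> B" using p True by (simp add: permutes_in_image)
    have "conjp g A B (conjp (inv_into A g) B A p) v = g (conjp (inv_into A g) B A p (inv_into A g v))"
      using True unfolding conjp_def[of g] by simp
    also have "\<dots> = g (inv_into A g (p (inv_into B (inv_into A g) (inv_into A g v))))"
      using u unfolding conjp_def by simp
    also have "inv_into B (inv_into A g) (inv_into A g v) = v"
      using gi True by (simp add: bij_betw_def)
    finally show ?thesis using g pv by (simp add: bij_betw_def f_inv_into_f)
  next
    case False
    then show ?thesis using p unfolding conjp_def by (simp add: permutes_not_in)
  qed
qed



definition Mx :: "nat \<Rightarrow> nat list \<Rightarrow> (nat \<Rightarrow> nat) \<Rightarrow> complex mat" where
  "Mx d L T = mat d d (\<lambda>(r,k). if T (L!k) = Suc r then 1 else 0)"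

lemma nth_take_drop_del:
  assumes "k < length xs - 1" "i < length xs"
  shows "(take i xs @ drop (Suc i) xs) ! k = xs ! (if k < i then k else Suc k)"
  using assms by (auto simp: nth_append min_def)

lemma adj_row:
  assumes A: "A \<in> carrier_mat n n" and r: "r < n" and j: "j < n"
  shows "(\<Sum>k<n. A $$ (r,k) * cofactor A j k) = (if r = j then det A else 0)"
proof -
  have "(A * adj_mat A) $$ (r,j) = (\<Sum> k < n. A $$ (r,k) * cofactor A j k)"
    unfolding times_mat_def scalar_prod_def adj_mat_def using r j A by (auto intro: sum.cong)
  moreover have "(A * adj_mat A) $$ (r,j) = (det A \<cdot>\<^sub>m 1\<^sub>m n) $$ (r,j)"
    using adj_mat(2)[OF A] by simp
  ultimately show ?thesis using r j by auto
qed

lemma det_identity: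
  assumes n: "n = Suc m" and lx: "length xs = n" and ly: "length ys = m"
  shows "det (Mx n xs T) * det (Mx m ys T) =
    (\<Sum>i<n. (-1) ^ (n - 1 - i) * (det (Mx n (ys @ [xs ! i]) T) *
        det (Mx m (take i xs @ drop (Suc i) xs) T)))"
proof -
  define A where "A = Mx n xs T"
  have A: "A \<in> carrier_mat n n" unfolding A_def Mx_def by simp
  define Y where "Y = (\<lambda>r. mat m m (\<lambda>(r',k). if T (ys!k) = Suc (if r'<r then r' else Suc r') then 1 else (0::complex)))"
  have D: "Mx m (take i xs @ drop (Suc i) xs) T = mat_delete A m i" if i: "i < n" for i
    by (rule eq_matI) (use i n lx in \<open>auto simp: Mx_def A_def mat_delete_def nth_take_drop_del\<close>)
  have W: "det (Mx n (ys @ [xs ! i]) T) = (\<Sum>r<n. A $$ (r,i) * ((-1)^(r+m) * det (Y r)))"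
    if i: "i < n" for i
  proof -
    have W: "Mx n (ys @ [xs ! i]) T \<in> carrier_mat n n" unfolding Mx_def by simp
    have "det (Mx n (ys @ [xs ! i]) T) = (\<Sum>r<n. Mx n (ys @ [xs ! i]) T $$ (r,m) * cofactor (Mx n (ys @ [xs ! i]) T) r m)"
      by (rule laplace_expansion_column[OF W]) (use n in auto)
    also have "\<dots> = (\<Sum>r<n. A $$ (r,i) * ((-1)^(r+m) * det (Y r)))"
    proof (rule sum.cong[OF refl])
      fix r assume r: "r \<in> {..<n}"
      have "mat_delete (Mx n (ys @ [xs ! i]) T) r m = Y r"
        by (rule eq_matI) (use r n ly in \<open>auto simp: Mx_def Y_def mat_delete_def nth_append\<close>)
      moreover have "Mx n (ys @ [xs ! i]) T $$ (r,m) = A $$ (r,i)"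
        using r n ly i lx by (simp add: Mx_def A_def nth_append)
      ultimately show "Mx n (ys @ [xs ! i]) T $$ (r,m) * cofactor (Mx n (ys @ [xs ! i]) T) r m =
          A $$ (r,i) * ((-1)^(r+m) * det (Y r))"
        by (simp add: cofactor_def)
    qed
    finally show ?thesis .
  qed
  have sg: "(-1::complex) ^ (n - 1 - i) = (-1) ^ (m + i)" if "i < n" for i
  proof -
    have "m + i = (n - 1 - i) + 2 * i" using that n by simp
    then show ?thesis by (simp add: power_add power_mult)
  qed
  have sg': "(-1::complex) ^ (n - Suc i) = (-1) ^ (i + m)" if "i < n" for i
    using sg[OF that] by (simp add: add.commute)
  have "(\<Sum>i<n. (-1) ^ (n - 1 - i) * (det (Mx n (ys @ [xs ! i]) T) *
        det (Mx m (take i xs @ drop (Suc i) xs) T))) =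
     (\<Sum>i<n. \<Sum>r<n. ((-1)^(r+m) * det (Y r)) * (A $$ (r,i) * cofactor A m i))"
  proof (rule sum.cong[OF refl])
    fix i assume i: "i \<in> {..<n}"
    show "(-1) ^ (n - 1 - i) * (det (Mx n (ys @ [xs ! i]) T) *
        det (Mx m (take i xs @ drop (Suc i) xs) T)) =
     (\<Sum>r<n. ((-1)^(r+m) * det (Y r)) * (A $$ (r,i) * cofactor A m i))"
      using i by (simp add: W D sg' cofactor_def sum_distrib_left sum_distrib_right ac_simps)
  qed
  also have "\<dots> = (\<Sum>r<n. ((-1)^(r+m) * det (Y r)) * (\<Sum>i<n. A $$ (r,i) * cofactor A m i))"
    by (subst sum.swap) (simp add: sum_distrib_left)
  also have "\<dots> = (\<Sum>r<n. ((-1)^(r+m) * det (Y r)) * (if r = m then det A else 0))"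
    by (rule sum.cong[OF refl], subst adj_row[OF A]) (use n in auto)
  also have "\<dots> = ((-1)^(m+m) * det (Y m)) * det A"
    by (simp add: n if_distrib[of "\<lambda>x. _ * x"] sum.delta' cong: if_cong)
  also have "Y m = Mx m ys T" unfolding Y_def Mx_def by (rule eq_matI) auto
  finally show ?thesis by (simp add: A_def flip: mult_2)
qed



lemma fun_if_eq_iff:
  assumes f: "bij_betw f A B"
  shows "((\<lambda>k. if k \<in> f ` A then h (inv_into A f k) else 0) = T) \<longleftrightarrow>
         (\<forall>k. k \<notin> B \<longrightarrow> T k = (0::nat)) \<and> (\<forall>a\<in>A. T (f a) = h a)"
proof -
  have img: "f ` A = B" and inj: "inj_on f A" using f by (auto simp: bij_betw_def)
  show ?thesis
  proof
    assume e: "(\<lambda>k. if k \<in> f ` A then h (inv_into A f k) else 0) = T"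
    show "(\<forall>k. k \<notin> B \<longrightarrow> T k = 0) \<and> (\<forall>a\<in>A. T (f a) = h a)"
      using inj img by (auto simp flip: e)
  next
    assume r: "(\<forall>k. k \<notin> B \<longrightarrow> T k = 0) \<and> (\<forall>a\<in>A. T (f a) = h a)"
    show "(\<lambda>k. if k \<in> f ` A then h (inv_into A f k) else 0) = T"
    proof
      fix k show "(if k \<in> f ` A then h (inv_into A f k) else 0) = T k"
        using r inj img by (auto simp: inv_into_f_f)
    qed
  qed
qed

lemma prod_indicator:
  "finite A \<Longrightarrow> (\<Prod>i\<in>A. if P i then (1::complex) else 0) = (if \<forall>i\<in>A. P i then 1 else 0)"
  by (induction A rule: finite_induct) auto

context
  fixes n :: nat and c1 c2 :: "nat list"
  assumes n1: "n \<ge> 1" and l1: "length c1 = n" and l2: "length c2 = n - 1"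
    and dist: "distinct (c1 @ c2)" and st: "set (c1 @ c2) = {1..2*n-1}"
begin

lemma cells_hook: "c \<in> cells (hook_shape n) \<longleftrightarrow> (snd c = 0 \<and> fst c < n) \<or> (snd c = 1 \<and> fst c < n - 1)"
proof (cases c)
  case (Pair r j)
  have len: "length (hook_shape n) = n" using n1 by (simp add: hook_shape_def)
  have "r < n \<Longrightarrow> hook_shape n ! r = (if r < n - 1 then 2 else 1)"
    using n1 by (auto simp: hook_shape_def nth_append)
  then show ?thesis using Pair len n1 by (auto simp: cells_def split: if_splits)
qed

lemma tab0: "tab_cols c1 c2 (r, 0) = c1 ! r" and tab1: "tab_cols c1 c2 (r, Suc 0) = c2 ! r"
  by (auto simp: tab_cols_def)

lemma disj: "v \<in> set c1 \<Longrightarrow> v \<notin> set c2"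
  using dist by auto

lemma t_bij: "bij_betw (tab_cols c1 c2) (cells (hook_shape n)) {1..2*n-1}"
proof -
  have d1: "distinct c1" and d2: "distinct c2" using dist by auto
  have ne: "\<And>r r'. r<n \<Longrightarrow> r'<n-1 \<Longrightarrow> c1!r \<noteq> c2!r'" using disj nth_mem l1 l2 by metis
  have "inj_on (tab_cols c1 c2) (cells (hook_shape n))"
  proof (rule inj_onI)
    fix a b assume a: "a \<in> cells (hook_shape n)" and b: "b \<in> cells (hook_shape n)"
      and e: "tab_cols c1 c2 a = tab_cols c1 c2 b"
    obtain ra ja rb jb where ab: "a = (ra, ja)" "b = (rb, jb)" by fastforce
    show "a = b"
      using a b e d1 d2 l1 l2 ne unfolding ab cells_hook
      by (auto simp: tab_cols_def nth_eq_iff_index_eq) (metis ne)+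
  qed
  moreover have "tab_cols c1 c2 ` cells (hook_shape n) = {1..2*n-1}"
  proof -
    have "tab_cols c1 c2 ` cells (hook_shape n) = set c1 \<union> set c2"
    proof
      show "tab_cols c1 c2 ` cells (hook_shape n) \<subseteq> set c1 \<union> set c2"
      proof
        fix v assume "v \<in> tab_cols c1 c2 ` cells (hook_shape n)"
        then obtain r j where "(r,j) \<in> cells (hook_shape n)" "v = tab_cols c1 c2 (r,j)" by auto
        then have "(j = 0 \<and> r < n \<and> v = c1 ! r) \<or> (j = 1 \<and> r < n - 1 \<and> v = c2 ! r)"
          unfolding cells_hook by (auto simp: tab_cols_def)
        then show "v \<in> set c1 \<union> set c2" using l1 l2 by auto
      qed
    next
      show "set c1 \<union> set c2 \<subseteq> tab_cols c1 c2 ` cells (hook_shape n)"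
      proof
        fix v assume "v \<in> set c1 \<union> set c2"
        then consider r where "r < n" "v = c1 ! r" | r where "r < n - 1" "v = c2 ! r"
          using l1 l2 by (auto simp: in_set_conv_nth)
        then show "v \<in> tab_cols c1 c2 ` cells (hook_shape n)"
        proof cases
          case 1 then show ?thesis by (intro image_eqI[of _ _ "(r,0)"]) (auto simp: cells_hook tab_cols_def)
        next
          case 2 then show ?thesis by (intro image_eqI[of _ _ "(r,1)"]) (auto simp: cells_hook tab_cols_def)
        qed
      qed
    qed
    then show ?thesis using st by simp
  qed
  ultimately show ?thesis by (simp add: bij_betw_def)
qed

lemma col_stab_iff: "\<beta> \<in> col_stab (hook_shape n) (2*n-1) (tab_cols c1 c2) \<longleftrightarrow>
   \<beta> permutes {1..2*n-1} \<and> (\<forall>v\<in>set c1. \<beta> v \<in> set c1) \<and> (\<forall>v\<in>set c2. \<beta> v \<in> set c2)"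
proof -
  have "(\<forall>c\<in>cells (hook_shape n). \<exists>c'\<in>cells (hook_shape n). snd c' = snd c \<and>
            \<beta> (tab_cols c1 c2 c) = tab_cols c1 c2 c') \<longleftrightarrow>
        (\<forall>v\<in>set c1. \<beta> v \<in> set c1) \<and> (\<forall>v\<in>set c2. \<beta> v \<in> set c2)"
  proof
    assume h: "\<forall>c\<in>cells (hook_shape n). \<exists>c'\<in>cells (hook_shape n). snd c' = snd c \<and>
            \<beta> (tab_cols c1 c2 c) = tab_cols c1 c2 c'"
    show "(\<forall>v\<in>set c1. \<beta> v \<in> set c1) \<and> (\<forall>v\<in>set c2. \<beta> v \<in> set c2)"
    proof safe
      fix v assume "v \<in> set c1"
      then obtain r where r: "r < n" "v = c1 ! r" using l1 by (auto simp: in_set_conv_nth)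
      then obtain c' where "c' \<in> cells (hook_shape n)" "snd c' = 0" "\<beta> v = tab_cols c1 c2 c'"
        using h[rule_format, of "(r,0)"] by (auto simp: cells_hook tab_cols_def)
      then show "\<beta> v \<in> set c1" using l1 by (cases c') (auto simp: cells_hook tab_cols_def)
    next
      fix v assume "v \<in> set c2"
      then obtain r where r: "r < n - 1" "v = c2 ! r" using l2 by (auto simp: in_set_conv_nth)
      then obtain c' where "c' \<in> cells (hook_shape n)" "snd c' = 1" "\<beta> v = tab_cols c1 c2 c'"
        using h[rule_format, of "(r,1)"] by (auto simp: cells_hook tab_cols_def)
      then show "\<beta> v \<in> set c2" using l2 by (cases c') (auto simp: cells_hook tab_cols_def)
    qed
  next
    assume h: "(\<forall>v\<in>set c1. \<beta> v \<in> set c1) \<and> (\<forall>v\<in>set c2. \<beta> v \<in> set c2)"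
    show "\<forall>c\<in>cells (hook_shape n). \<exists>c'\<in>cells (hook_shape n). snd c' = snd c \<and>
            \<beta> (tab_cols c1 c2 c) = tab_cols c1 c2 c'"
    proof
      fix c assume c: "c \<in> cells (hook_shape n)"
      obtain r j where rj: "c = (r,j)" by fastforce
      show "\<exists>c'\<in>cells (hook_shape n). snd c' = snd c \<and> \<beta> (tab_cols c1 c2 c) = tab_cols c1 c2 c'"
      proof (cases "j = 0")
        case True
        then have "c1 ! r \<in> set c1" using c rj l1 by (auto simp: cells_hook)
        then have "\<beta> (c1 ! r) \<in> set c1" using h by blast
        then obtain r' where "r' < n" "\<beta> (c1 ! r) = c1 ! r'" using l1 by (auto simp: in_set_conv_nth)
        then show ?thesis using True rj
          by (intro bexI[of _ "(r',0)"]) (auto simp: cells_hook tab_cols_def)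
      next
        case False
        then have j: "j = 1" "r < n - 1" using c rj by (auto simp: cells_hook)
        then have "c2 ! r \<in> set c2" using l2 by auto
        then have "\<beta> (c2 ! r) \<in> set c2" using h by blast
        then obtain r' where "r' < n - 1" "\<beta> (c2 ! r) = c2 ! r'" using l2 by (auto simp: in_set_conv_nth)
        then show ?thesis using j rj
          by (intro bexI[of _ "(r',1)"]) (auto simp: cells_hook tab_cols_def)
      qed
    qed
  qed
  then show ?thesis unfolding col_stab_def by auto
qed

lemma tabloid_iff:
  assumes b: "\<beta> permutes {1..2*n-1}"
  shows "tabloid (hook_shape n) (\<beta> \<circ> tab_cols c1 c2) = T \<longleftrightarrow>
    (\<forall>k. k \<notin> {1..2*n-1} \<longrightarrow> T k = 0) \<and> (\<forall>r<n. T (\<beta> (c1 ! r)) = Suc r) \<and>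
    (\<forall>r<n-1. T (\<beta> (c2 ! r)) = Suc r)"
proof -
  have bb: "bij_betw (\<beta> \<circ> tab_cols c1 c2) (cells (hook_shape n)) {1..2*n-1}"
    by (rule bij_betw_trans[OF t_bij permutes_imp_bij[OF b]])
  have "tabloid (hook_shape n) (\<beta> \<circ> tab_cols c1 c2) = T \<longleftrightarrow>
    (\<forall>k. k \<notin> {1..2*n-1} \<longrightarrow> T k = 0) \<and> (\<forall>c\<in>cells (hook_shape n). T ((\<beta> \<circ> tab_cols c1 c2) c) = Suc (fst c))"
    unfolding tabloid_def by (rule fun_if_eq_iff[OF bb])
  also have "(\<forall>c\<in>cells (hook_shape n). T ((\<beta> \<circ> tab_cols c1 c2) c) = Suc (fst c)) \<longleftrightarrow>
    (\<forall>r<n. T (\<beta> (c1 ! r)) = Suc r) \<and> (\<forall>r<n-1. T (\<beta> (c2 ! r)) = Suc r)"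
  proof
    assume h: "\<forall>c\<in>cells (hook_shape n). T ((\<beta> \<circ> tab_cols c1 c2) c) = Suc (fst c)"
    show "(\<forall>r<n. T (\<beta> (c1 ! r)) = Suc r) \<and> (\<forall>r<n-1. T (\<beta> (c2 ! r)) = Suc r)"
    proof safe
      fix r assume "r < n" then show "T (\<beta> (c1 ! r)) = Suc r"
        using h[rule_format, of "(r,0)"] by (simp add: cells_hook tab_cols_def)
    next
      fix r assume "r < n - 1" then show "T (\<beta> (c2 ! r)) = Suc r"
        using h[rule_format, of "(r,1)"] by (simp add: cells_hook tab_cols_def)
    qed
  next
    assume h: "(\<forall>r<n. T (\<beta> (c1 ! r)) = Suc r) \<and> (\<forall>r<n-1. T (\<beta> (c2 ! r)) = Suc r)"
    show "\<forall>c\<in>cells (hook_shape n). T ((\<beta> \<circ> tab_cols c1 c2) c) = Suc (fst c)"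
    proof
      fix c assume "c \<in> cells (hook_shape n)"
      then show "T ((\<beta> \<circ> tab_cols c1 c2) c) = Suc (fst c)"
        using h by (cases c) (auto simp: cells_hook tab_cols_def)
    qed
  qed
  finally show ?thesis .
qed


lemma det_Mx:
  assumes l: "length L = d"
  shows "det (Mx d L T) = (\<Sum>p\<in>{p. p permutes {..<d}}. of_int (sign p) *
       (if \<forall>r<d. T (L ! (p r)) = Suc r then 1 else 0))"
proof -
  have A: "Mx d L T \<in> carrier_mat d d" by (simp add: Mx_def)
  show ?thesis
    unfolding det_def'[OF A] atLeast0LessThan
  proof (rule sum.cong[OF refl])
    fix p assume p: "p \<in> {p. p permutes {..<d}}"
    have "(\<Prod>i\<in>{..<d}. Mx d L T $$ (i, p i)) = (\<Prod>i\<in>{..<d}. if T (L ! (p i)) = Suc i then 1 else 0)"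
    proof (rule prod.cong[OF refl])
      fix i assume i: "i \<in> {..<d}"
      then have "p i < d" using p permutes_in_image[of p "{..<d}" i] by simp
      then show "Mx d L T $$ (i, p i) = (if T (L ! (p i)) = Suc i then 1 else 0)"
        using i by (simp add: Mx_def)
    qed
    also have "\<dots> = (if \<forall>r<d. T (L ! (p r)) = Suc r then 1 else 0)"
      by (subst prod_indicator) auto
    finally show "of_int (sign p) * (\<Prod>i\<in>{..<d}. Mx d L T $$ (i, p i)) =
       of_int (sign p) * (if \<forall>r<d. T (L ! (p r)) = Suc r then 1 else 0)" by simp
  qed
qed

lemma poly_det:
  "polytabloid (hook_shape n) (2*n-1) (tab_cols c1 c2) T =
     (if \<forall>k. k \<notin> {1..2*n-1} \<longrightarrow> T k = 0 then 1 else 0) * det (Mx n c1 T) * det (Mx (n-1) c2 T)"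
proof -
  define m where "m = n - 1"
  define S where "S = {1..2*n-1}"
  define g1 where "g1 = (\<lambda>k. c1 ! k)"
  define g2 where "g2 = (\<lambda>k. c2 ! k)"
  have d1: "distinct c1" and d2: "distinct c2" using dist by auto
  have bij1: "bij_betw g1 {..<n} (set c1)" unfolding g1_def by (rule bij_betw_nth) (use d1 l1 in auto)
  have bij2: "bij_betw g2 {..<m} (set c2)" unfolding g2_def m_def by (rule bij_betw_nth) (use d2 l2 in auto)
  have S12: "S = set c1 \<union> set c2" using st S_def by simp
  define P where "P = {p. p permutes {..<n}}"
  define Q where "Q = {q. q permutes {..<m}}"
  define restr where "restr = (\<lambda>A (\<beta>::nat\<Rightarrow>nat) v. if v \<in> A then \<beta> v else v)"
  define \<Phi> where "\<Phi> = (\<lambda>(p,q). conjp g1 {..<n} (set c1) p \<circ> conjp g2 {..<m} (set c2) q)"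
  define I where "I = (\<lambda>\<beta>. (conjp (inv_into {..<n} g1) (set c1) {..<n} (restr (set c1) \<beta>),
                              conjp (inv_into {..<m} g2) (set c2) {..<m} (restr (set c2) \<beta>)))"
  define CS where "CS = col_stab (hook_shape n) (2*n-1) (tab_cols c1 c2)"
  have CSi: "\<beta> \<in> CS \<longleftrightarrow> \<beta> permutes S \<and> (\<forall>v\<in>set c1. \<beta> v \<in> set c1) \<and> (\<forall>v\<in>set c2. \<beta> v \<in> set c2)" for \<beta>
    unfolding CS_def S_def by (rule col_stab_iff)
  have cp1: "conjp g1 {..<n} (set c1) p permutes set c1 \<and> sign (conjp g1 {..<n} (set c1) p) = sign p"
    if "p \<in> P" for p using conjp_perm[OF bij1 _ that[unfolded P_def, simplified]] by simp
  have cp2: "conjp g2 {..<m} (set c2) q permutes set c2 \<and> sign (conjp g2 {..<m} (set c2) q) = sign q"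
    if "q \<in> Q" for q using conjp_perm[OF bij2 _ that[unfolded Q_def, simplified]] by simp
  have Phi1: "\<Phi> (p,q) (c1 ! r) = c1 ! (p r)" if "r < n" for p q r
  proof -
    have "c1 ! r \<notin> set c2" using disj that l1 by simp
    then show ?thesis using conjp_in[OF bij1, of r p] that unfolding \<Phi>_def by (simp add: conjp_out g1_def)
  qed
  have Phi2: "\<Phi> (p,q) (c2 ! r) = c2 ! (q r)" if "r < m" "q \<in> Q" for p q r
  proof -
    have "q r < m" using that permutes_in_image[of q "{..<m}" r] by (simp add: Q_def)
    then have "c2 ! (q r) \<in> set c2" using l2 m_def by simp
    then have "c2 ! (q r) \<notin> set c1" using disj by blast
    then show ?thesis using conjp_in[OF bij2, of r q] that unfolding \<Phi>_def by (simp add: conjp_out g2_def)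
  qed
  have PhiS: "\<Phi> (p,q) permutes S" if "p \<in> P" "q \<in> Q" for p q
    unfolding \<Phi>_def using cp1[OF that(1)] cp2[OF that(2)] S12
    by (auto intro!: permutes_compose intro: permutes_subset)
  have PhiCS: "\<Phi> (p,q) \<in> CS" if "p \<in> P" "q \<in> Q" for p q
  proof -
    have "\<forall>v\<in>set c1. \<Phi> (p,q) v \<in> set c1"
    proof
      fix v assume "v \<in> set c1"
      then obtain r where r: "r < n" "v = c1 ! r" using l1 by (auto simp: in_set_conv_nth)
      have "p r < n" using that r permutes_in_image[of p "{..<n}" r] by (simp add: P_def)
      then show "\<Phi> (p,q) v \<in> set c1" using r Phi1 l1 by simp
    qed
    moreover have "\<forall>v\<in>set c2. \<Phi> (p,q) v \<in> set c2"
    proof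
      fix v assume "v \<in> set c2"
      then obtain r where r: "r < m" "v = c2 ! r" using l2 m_def by (auto simp: in_set_conv_nth)
      have "q r < m" using that r permutes_in_image[of q "{..<m}" r] by (simp add: Q_def)
      then show "\<Phi> (p,q) v \<in> set c2" using r Phi2 l2 m_def that by simp
    qed
    ultimately show ?thesis using CSi PhiS[OF that] by blast
  qed
  have Phisign: "sign (\<Phi> (p,q)) = sign p * sign q" if "p \<in> P" "q \<in> Q" for p q
  proof -
    have f1: "finite (set c1)" "finite (set c2)" by auto
    show ?thesis unfolding \<Phi>_def using cp1[OF that(1)] cp2[OF that(2)]
      by (simp add: sign_compose permutes_imp_permutation[OF f1(1)] permutes_imp_permutation[OF f1(2)])
  qed
  have restrP: "restr A \<beta> permutes A" if "\<beta> permutes S" "A \<subseteq> S" "\<forall>v\<in>A. \<beta> v \<in> A" "finite A" for A \<beta>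
  proof (rule bij_imp_permutes)
    have inj: "inj_on (restr A \<beta>) A" using permutes_inj[OF that(1)]
      unfolding restr_def by (auto simp: inj_on_def dest: injD)
    moreover have "restr A \<beta> ` A \<subseteq> A" using that(3) unfolding restr_def by auto
    ultimately show "bij_betw (restr A \<beta>) A A" using endo_inj_surj[OF that(4)] by (simp add: bij_betw_def)
    show "\<And>x. x \<notin> A \<Longrightarrow> restr A \<beta> x = x" unfolding restr_def by auto
  qed
  have restr_CS: "restr (set c1) \<beta> permutes set c1 \<and> restr (set c2) \<beta> permutes set c2" if "\<beta> \<in> CS" for \<beta>
    using CSi[of \<beta>] that S12 by (auto intro!: restrP)
  have w1: "I (\<Phi> a) = a" if aPQ: "a \<in> P \<times> Q" for a
  proof -
    obtain p q where a: "a = (p,q)" "p \<in> P" "q \<in> Q" using aPQ by (cases a) auto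
    have r1: "restr (set c1) (\<Phi> (p,q)) = conjp g1 {..<n} (set c1) p"
    proof
      fix v show "restr (set c1) (\<Phi> (p,q)) v = conjp g1 {..<n} (set c1) p v"
        using disj[of v] unfolding restr_def \<Phi>_def by (auto simp: conjp_out)
    qed
    have r2: "restr (set c2) (\<Phi> (p,q)) = conjp g2 {..<m} (set c2) q"
    proof
      fix v show "restr (set c2) (\<Phi> (p,q)) v = conjp g2 {..<m} (set c2) q v"
      proof (cases "v \<in> set c2")
        case True
        then have "conjp g2 {..<m} (set c2) q v \<in> set c2" using cp2[OF a(3)] by (simp add: permutes_in_image)
        then have "conjp g2 {..<m} (set c2) q v \<notin> set c1" using disj by blast
        then show ?thesis using True unfolding restr_def \<Phi>_def by (simp add: conjp_out)
      next
        case False then show ?thesis unfolding restr_def \<Phi>_def by (simp add: conjp_out)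
      qed
    qed
    show ?thesis unfolding a(1) I_def r1 r2
      using conjp_conjp[OF bij1, of p] conjp_conjp[OF bij2, of q] a(2,3) by (simp add: P_def Q_def)
  qed
  have w2: "\<Phi> a \<in> CS" if "a \<in> P \<times> Q" for a using that PhiCS by auto
  have w3: "\<Phi> (I b) = b" if "b \<in> CS" for b
  proof -
    have e1: "conjp g1 {..<n} (set c1) (conjp (inv_into {..<n} g1) (set c1) {..<n} (restr (set c1) b)) = restr (set c1) b"
      by (rule conjp_conjp2[OF bij1]) (use restr_CS[OF that] in blast)
    have e2: "conjp g2 {..<m} (set c2) (conjp (inv_into {..<m} g2) (set c2) {..<m} (restr (set c2) b)) = restr (set c2) b"
      by (rule conjp_conjp2[OF bij2]) (use restr_CS[OF that] in blast)
    have bS: "b permutes S" using CSi that by blast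
    have "restr (set c1) b \<circ> restr (set c2) b = b"
    proof
      fix v show "(restr (set c1) b \<circ> restr (set c2) b) v = b v"
      proof (cases "v \<in> set c2")
        case True
        then have "b v \<in> set c2" using CSi that by blast
        then show ?thesis using True disj unfolding restr_def by auto
      next
        case False
        then show ?thesis using S12 permutes_not_in[OF bS] unfolding restr_def by auto
      qed
    qed
    then show ?thesis unfolding I_def \<Phi>_def using e1 e2 by simp
  qed
  have w4: "I b \<in> P \<times> Q" if "b \<in> CS" for b
  proof -
    have "conjp (inv_into {..<n} g1) (set c1) {..<n} (restr (set c1) b) permutes {..<n}"
      using conjp_perm[OF bij_betw_inv_into[OF bij1] _ conjunct1[OF restr_CS[OF that]]] by simp
    moreover have "conjp (inv_into {..<m} g2) (set c2) {..<m} (restr (set c2) b) permutes {..<m}"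
      using conjp_perm[OF bij_betw_inv_into[OF bij2] _ conjunct2[OF restr_CS[OF that]]] by simp
    ultimately show ?thesis unfolding I_def P_def Q_def by simp
  qed
  define Z where "Z = (\<forall>k. k \<notin> {1..2*n-1} \<longrightarrow> T k = 0)"
  define f1 where "f1 = (\<lambda>p. of_int (sign p) * (if \<forall>r<n. T (c1 ! (p r)) = Suc r then 1 else (0::complex)))"
  define f2 where "f2 = (\<lambda>q. of_int (sign q) * (if \<forall>r<m. T (c2 ! (q r)) = Suc r then 1 else (0::complex)))"
  have "polytabloid (hook_shape n) (2*n-1) (tab_cols c1 c2) T =
     (\<Sum>\<beta>\<in>CS. of_int (sign \<beta>) * (if tabloid (hook_shape n) (\<beta> \<circ> tab_cols c1 c2) = T then 1 else 0))"
    unfolding polytabloid_def CS_def by simp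
  also have "\<dots> = (\<Sum>a\<in>P \<times> Q. (if Z then 1 else 0) * (f1 (fst a) * f2 (snd a)))"
  proof (rule sym, rule sum.reindex_bij_witness[of _ I \<Phi>])
    show "\<And>a. a \<in> P \<times> Q \<Longrightarrow> I (\<Phi> a) = a" by (rule w1)
    show "\<And>a. a \<in> P \<times> Q \<Longrightarrow> \<Phi> a \<in> CS" by (rule w2)
    show "\<And>b. b \<in> CS \<Longrightarrow> \<Phi> (I b) = b" by (rule w3)
    show "\<And>b. b \<in> CS \<Longrightarrow> I b \<in> P \<times> Q" by (rule w4)
    fix a assume a: "a \<in> P \<times> Q"
    obtain p q where pq: "a = (p,q)" "p \<in> P" "q \<in> Q" using a by (cases a) auto
    have tab: "tabloid (hook_shape n) (\<Phi> (p,q) \<circ> tab_cols c1 c2) = T \<longleftrightarrow>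
        Z \<and> (\<forall>r<n. T (c1 ! (p r)) = Suc r) \<and> (\<forall>r<m. T (c2 ! (q r)) = Suc r)"
      unfolding tabloid_iff[OF PhiS[OF pq(2,3), unfolded S_def]] Z_def m_def
      using Phi1 Phi2[OF _ pq(3)] m_def by auto
    show "of_int (sign (\<Phi> a)) * (if tabloid (hook_shape n) (\<Phi> a \<circ> tab_cols c1 c2) = T then 1 else 0) =
        (if Z then 1 else 0) * (f1 (fst a) * f2 (snd a))"
      unfolding pq(1) tab using Phisign[OF pq(2,3)] by (simp add: f1_def f2_def)
  qed
  also have "\<dots> = (if Z then 1 else 0) * (sum f1 P * sum f2 Q)"
  proof -
    have "sum f1 P * sum f2 Q = (\<Sum>a\<in>P \<times> Q. f1 (fst a) * f2 (snd a))"
      unfolding sum_product sum.cartesian_product by (simp add: split_beta)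
    then show ?thesis by (simp add: sum_distrib_left)
  qed
  also have "sum f1 P = det (Mx n c1 T)" unfolding f1_def P_def by (rule det_Mx[symmetric, OF l1])
  also have "sum f2 Q = det (Mx (n-1) c2 T)" unfolding f2_def Q_def m_def by (rule det_Mx[symmetric]) (use l2 in simp)
  finally show ?thesis by (simp add: Z_def)
qed

end

lemma if_mult1: "(if P then 1 else 0) * (x::complex) = (if P then x else 0)" by simp

lemma mset_swap:
  assumes "i < length xs"
  shows "mset ((ys @ [xs ! i]) @ (take i xs @ drop (Suc i) xs)) = mset (xs @ ys)"
proof -
  have "mset xs = mset (take i xs @ xs ! i # drop (Suc i) xs)"
    using id_take_nth_drop[OF assms] by simp
  then show ?thesis by (simp add: ac_simps)
qed

lemma part1:
  fixes n :: nat and xs ys :: "nat list"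
  assumes "n \<ge> 2"
    and lx: "length xs = n" and ly: "length ys = n - 1"
    and d: "distinct (xs @ ys)" and s: "set (xs @ ys) = {1..2*n-1}"
  shows "polytabloid (hook_shape n) (2*n-1) (tab_cols xs ys) =
           (\<lambda>T. \<Sum>i<n. (-1) ^ (n - 1 - i) *
              polytabloid (hook_shape n) (2*n-1)
                (tab_cols (ys @ [xs ! i]) (take i xs @ drop (Suc i) xs)) T)"
proof
  fix T :: "nat \<Rightarrow> nat"
  have n1: "n \<ge> 1" using assms by simp
  define Z where "Z = (if \<forall>k. k \<notin> {1..2*n-1} \<longrightarrow> T k = 0 then 1 else (0::complex))"
  have L: "polytabloid (hook_shape n) (2*n-1) (tab_cols xs ys) T = Z * det (Mx n xs T) * det (Mx (n-1) ys T)"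
    unfolding Z_def by (rule poly_det[OF n1 lx ly d s])
  have R: "polytabloid (hook_shape n) (2*n-1) (tab_cols (ys @ [xs ! i]) (take i xs @ drop (Suc i) xs)) T
      = Z * det (Mx n (ys @ [xs ! i]) T) * det (Mx (n-1) (take i xs @ drop (Suc i) xs) T)" if i: "i < n" for i
  proof -
    have ms: "mset ((ys @ [xs ! i]) @ (take i xs @ drop (Suc i) xs)) = mset (xs @ ys)"
      using mset_swap[of i xs ys] i lx by simp
    show ?thesis unfolding Z_def
    proof (rule poly_det[OF n1])
      show "length (ys @ [xs ! i]) = n" using ly n1 by simp
      show "length (take i xs @ drop (Suc i) xs) = n - 1" using lx i by simp
      show "distinct ((ys @ [xs ! i]) @ take i xs @ drop (Suc i) xs)"
        using mset_eq_imp_distinct_iff[OF ms] d by simp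
      show "set ((ys @ [xs ! i]) @ take i xs @ drop (Suc i) xs) = {1..2 * n - 1}"
        using mset_eq_setD[OF ms] s by simp
    qed
  qed
  have n: "n = Suc (n - 1)" using n1 by simp
  have "(\<Sum>i<n. (-1) ^ (n - 1 - i) *
              polytabloid (hook_shape n) (2*n-1)
                (tab_cols (ys @ [xs ! i]) (take i xs @ drop (Suc i) xs)) T) =
        Z * (\<Sum>i<n. (-1) ^ (n - 1 - i) * (det (Mx n (ys @ [xs ! i]) T) *
          det (Mx (n-1) (take i xs @ drop (Suc i) xs) T)))"
  proof -
    have "(\<Sum>i<n. (-1) ^ (n - 1 - i) *
              polytabloid (hook_shape n) (2*n-1)
                (tab_cols (ys @ [xs ! i]) (take i xs @ drop (Suc i) xs)) T) =
        (\<Sum>i<n. Z * ((-1) ^ (n - 1 - i) * (det (Mx n (ys @ [xs ! i]) T) *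
          det (Mx (n-1) (take i xs @ drop (Suc i) xs) T))))"
    proof (rule sum.cong[OF refl])
      fix i assume "i \<in> {..<n}"
      then show "(-1) ^ (n - 1 - i) *
              polytabloid (hook_shape n) (2*n-1)
                (tab_cols (ys @ [xs ! i]) (take i xs @ drop (Suc i) xs)) T =
        Z * ((-1) ^ (n - 1 - i) * (det (Mx n (ys @ [xs ! i]) T) *
          det (Mx (n-1) (take i xs @ drop (Suc i) xs) T)))"
        using R[of i] by simp
    qed
    then show ?thesis by (simp add: sum_distrib_left)
  qed
  also have "\<dots> = Z * (det (Mx n xs T) * det (Mx (n-1) ys T))"
    using det_identity[OF n lx ly] by simp
  finally show "polytabloid (hook_shape n) (2*n-1) (tab_cols xs ys) T =
           (\<Sum>i<n. (-1) ^ (n - 1 - i) *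
              polytabloid (hook_shape n) (2*n-1)
                (tab_cols (ys @ [xs ! i]) (take i xs @ drop (Suc i) xs)) T)"
    using L by simp
qed

lemma valid_swap:
  assumes "n \<ge> 2" "valid_bracket n b" "i < n"
  shows "valid_bracket n (snd b @ [fst b ! i], take i (fst b) @ drop (Suc i) (fst b))"
proof -
  have ms: "mset ((snd b @ [fst b ! i]) @ (take i (fst b) @ drop (Suc i) (fst b))) = mset (fst b @ snd b)"
    using mset_swap[of i "fst b" "snd b"] assms by (simp add: valid_bracket_def)
  show ?thesis using assms mset_eq_imp_distinct_iff[OF ms] mset_eq_setD[OF ms]
    unfolding valid_bracket_def by simp
qed

lemma finite_valid: "finite {b. valid_bracket n b}"
proof -
  have "{b. valid_bracket n b} \<subseteq> {xs. set xs \<subseteq> {1..2*n-1} \<and> length xs = n} \<times> {ys. set ys \<subseteq> {1..2*n-1} \<and> length ys = n - 1}"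
    unfolding valid_bracket_def by auto
  moreover have "finite ({xs. set xs \<subseteq> {1..2*n-1} \<and> length xs = n} \<times> {ys. set ys \<subseteq> {1..2*n-1} \<and> length ys = n - 1})"
    by (intro finite_cartesian_product finite_lists_length_eq) auto
  ultimately show ?thesis by (rule finite_subset)
qed

theorem mainTheorem10:
  fixes n :: nat and xs ys :: "nat list"
  assumes "n \<ge> 2"
    and "length xs = n" and "length ys = n - 1"
    and "distinct (xs @ ys)" and "set (xs @ ys) = {1..2*n-1}"
  shows "polytabloid (hook_shape n) (2*n-1) (tab_cols xs ys) =
           (\<lambda>T. \<Sum>i<n. (-1) ^ (n - 1 - i) *
              polytabloid (hook_shape n) (2*n-1)
                (tab_cols (ys @ [xs ! i]) (take i xs @ drop (Suc i) xs)) T)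
         \<and> (\<forall>c. (\<forall>b. \<not> valid_bracket n b \<longrightarrow> c b = 0) \<longrightarrow> Psi_lin n (phi_lin n c) = (\<lambda>T. 0))"
proof (intro conjI allI impI)
  show "polytabloid (hook_shape n) (2*n-1) (tab_cols xs ys) =
           (\<lambda>T. \<Sum>i<n. (-1) ^ (n - 1 - i) *
              polytabloid (hook_shape n) (2*n-1)
                (tab_cols (ys @ [xs ! i]) (take i xs @ drop (Suc i) xs)) T)"
    by (rule part1[OF assms])
next
  fix c :: "nat list \<times> nat list \<Rightarrow> complex"
  define VB where "VB = {b. valid_bracket n b}"
  have fin: "finite VB" unfolding VB_def by (rule finite_valid)
  define E where "E = (\<lambda>b. polytabloid (hook_shape n) (2*n-1) (tab_cols (fst b) (snd b)))"
  define X where "X = (\<lambda>(b::nat list \<times> nat list) i. (snd b @ [fst b ! i], take i (fst b) @ drop (Suc i) (fst b)))"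
  show "Psi_lin n (phi_lin n c) = (\<lambda>T. 0)"
  proof
    fix T
    have inner: "(\<Sum>b'\<in>VB. phi_gen n b b' * E b' T) = 0" if b: "b \<in> VB" for b
    proof -
      have XV: "X b i \<in> VB" if "i < n" for i
        using valid_swap[OF assms(1) _ that, of b] b unfolding VB_def X_def by simp
      have "(\<Sum>b'\<in>VB. phi_gen n b b' * E b' T) =
          (\<Sum>b'\<in>VB. (if b' = b then E b' T else 0) -
             (\<Sum>i<n. (-1) ^ (n - 1 - i) * (if b' = X b i then E b' T else 0)))"
        unfolding phi_gen_def X_def by (intro sum.cong refl) (simp add: left_diff_distrib sum_distrib_right mult.assoc if_mult1)
      also have "\<dots> = E b T - (\<Sum>i<n. (-1) ^ (n - 1 - i) * E (X b i) T)"
        unfolding sum_subtractf using fin b XV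
        by (subst sum.swap) (simp add: sum_distrib_left[symmetric] sum.delta')
      also have "\<dots> = 0"
      proof -
        have vb: "valid_bracket n b" using b VB_def by simp
        have "E b = (\<lambda>T. \<Sum>i<n. (-1) ^ (n - 1 - i) * E (X b i) T)"
          unfolding E_def X_def
          using part1[OF assms(1), of "fst b" "snd b"] vb by (simp add: valid_bracket_def)
        then show ?thesis by simp
      qed
      finally show ?thesis .
    qed
    have "Psi_lin n (phi_lin n c) T = (\<Sum>b'\<in>VB. (\<Sum>b\<in>VB. c b * phi_gen n b b') * E b' T)"
      unfolding Psi_lin_def phi_lin_def VB_def E_def by simp
    also have "\<dots> = (\<Sum>b\<in>VB. c b * (\<Sum>b'\<in>VB. phi_gen n b b' * E b' T))"
      by (simp add: sum_distrib_left sum_distrib_right ac_simps) (rule sum.swap)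
    also have "\<dots> = 0" using inner by simp
    finally show "Psi_lin n (phi_lin n c) T = 0" .
  qed
qed

end
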